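(* Fix $\nu\ge1$ and let $\{a_{ij}\},\{b_{jk}\},\{c_{ik}\}\in\mathcal B$ (notation in the context). Let $\{t_{ijk}\}\in\mathcal T(\{a_{ij}\},\{b_{jk}\},\{c_{ik}\})$, with $t^*_{jjj}$ as defined in the context. Then: (a) $a^*_{jj}+b^*_{jj}-t^*_{jjj}\ge 0$ for every $j$; (b) if $a^*_{jj}+b^*_{jj}-t^*_{jjj}=0$ for all $j$, then $a_{ij}+b_{ij}=c_{ij}$ for all $i\ne j$.
   Context: $\mathcal B$ is the set of collections $\{a_{ij}\}$ of nonnegative integers indexed by pairs $i\ne j$ in $\{1,\dots,\nu\}$ such that $\sum_{i:i\ne j}a_{ij}=\sum_{i:i\ne j}a_{ji}$ for every $j$; for such a collection put $a^*_{jj}:=\sum_{i:i\ne j}a_{ji}=\sum_{i:i\ne j}a_{ij}$ (similarly $b^*_{jj}$, $c^*_{jj}$). For $\{a_{ij}\},\{b_{jk}\},\{c_{ik}\}\in\mathcal B$, $\mathcal T(\{a_{ij}\},\{b_{jk}\},\{c_{ik}\})$ is the set of collections $\{t_{ijk}\}$ of nonnegative integers indexed by triples $(i,j,k)\in\{1,\dots,\nu\}^3$ not of the form $(j,j,j)$, such that $\sum_i t_{ijk}=b_{jk}$ for $j\ne k$; $\sum_j t_{ijk}=c_{ik}$ for $i\ne k$; $\sum_k t_{ijk}=a_{ij}$ for $i\ne j$; and for every $j$, $$a^*_{jj}+\sum_{k:k\ne j}t_{jjk}=b^*_{jj}+\sum_{i:i\ne j}t_{ijj}=c^*_{jj}+\sum_{m:m\ne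 j}t_{jmj};$$ this common value is denoted $t^*_{jjj}$. *)

theory Defs
  imports Main
begin

text \<open>Indices range over {1..nu}. A collection {a_ij} (i ~= j) is a function
  nat => nat => nat; its values off the index set are irrelevant.\<close>

definition inB :: "nat \<Rightarrow> (nat \<Rightarrow> nat \<Rightarrow> nat) \<Rightarrow> bool" where
  "inB \<nu> a \<longleftrightarrow> (\<forall>j\<in>{1..\<nu>}.
      (\<Sum>i\<in>{1..\<nu>}-{j}. a i j) = (\<Sum>i\<in>{1..\<nu>}-{j}. a j i))"

definition dstar :: "nat \<Rightarrow> (nat \<Rightarrow> nat \<Rightarrow> nat) \<Rightarrow> nat \<Rightarrow> nat" where
  "dstar \<nu> a j = (\<Sum>i\<in>{1..\<nu>}-{j}. a j i)"

definition inT :: "nat \<Rightarrow> (nat \<Rightarrow> nat \<Rightarrow> nat) \<Rightarrow> (nat \<Rightarrow> nat \<Rightarrow> nat) \<Rightarrow>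
    (nat \<Rightarrow> nat \<Rightarrow> nat) \<Rightarrow> (nat \<Rightarrow> nat \<Rightarrow> nat \<Rightarrow> nat) \<Rightarrow> bool" where
  "inT \<nu> a b c t \<longleftrightarrow>
     (\<forall>j\<in>{1..\<nu>}. \<forall>k\<in>{1..\<nu>}. j \<noteq> k \<longrightarrow> (\<Sum>i\<in>{1..\<nu>}. t i j k) = b j k) \<and>
     (\<forall>i\<in>{1..\<nu>}. \<forall>k\<in>{1..\<nu>}. i \<noteq> k \<longrightarrow> (\<Sum>j\<in>{1..\<nu>}. t i j k) = c i k) \<and>
     (\<forall>i\<in>{1..\<nu>}. \<forall>j\<in>{1..\<nu>}. i \<noteq> j \<longrightarrow> (\<Sum>k\<in>{1..\<nu>}. t i j k) = a i j) \<and>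
     (\<forall>j\<in>{1..\<nu>}.
        dstar \<nu> a j + (\<Sum>k\<in>{1..\<nu>}-{j}. t j j k) = dstar \<nu> b j + (\<Sum>i\<in>{1..\<nu>}-{j}. t i j j) \<and>
        dstar \<nu> b j + (\<Sum>i\<in>{1..\<nu>}-{j}. t i j j) = dstar \<nu> c j + (\<Sum>m\<in>{1..\<nu>}-{j}. t j m j))"

text \<open>t^*_{jjj}, the common value above\<close>
definition tstar :: "nat \<Rightarrow> (nat \<Rightarrow> nat \<Rightarrow> nat) \<Rightarrow> (nat \<Rightarrow> nat \<Rightarrow> nat \<Rightarrow> nat) \<Rightarrow> nat \<Rightarrow> nat" where
  "tstar \<nu> a t j = dstar \<nu> a j + (\<Sum>k\<in>{1..\<nu>}-{j}. t j j k)"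

end

theory Submission
  imports Defs
begin

lemma sum_eq_pointwise:
  fixes f g :: "'a \<Rightarrow> nat"
  assumes "finite A" "\<forall>x\<in>A. g x \<le> f x" "sum f A = sum g A" "x \<in> A"
  shows "f x = g x"
proof -
  have "sum (\<lambda>x. f x - g x) A = 0" using sum_subtractf_nat[of A g f] assms(2,3) by simp
  then have "f x - g x = 0" using assms by simp
  then show ?thesis using assms by force
qed

lemma split_sum:
  fixes f :: "nat \<Rightarrow> nat"
  assumes "j \<in> {1..n}"
  shows "(\<Sum>i\<in>{1..n}. f i) = f j + (\<Sum>i\<in>{1..n}-{j}. f i)"
  using assms by (simp add: sum.remove)

theorem lemma3:
  fixes \<nu> :: nat and a b c :: "nat \<Rightarrow> nat \<Rightarrow> nat" and t :: "nat \<Rightarrow> nat \<Rightarrow> nat \<Rightarrow> nat"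
  assumes "\<nu> \<ge> 1"
    and "inB \<nu> a" and "inB \<nu> b" and "inB \<nu> c"
    and "inT \<nu> a b c t"
  shows "(\<forall>j\<in>{1..\<nu>}. int (dstar \<nu> a j) + int (dstar \<nu> b j) - int (tstar \<nu> a t j) \<ge> 0)
     \<and> ((\<forall>j\<in>{1..\<nu>}. int (dstar \<nu> a j) + int (dstar \<nu> b j) - int (tstar \<nu> a t j) = 0) \<longrightarrow>
        (\<forall>i\<in>{1..\<nu>}. \<forall>j\<in>{1..\<nu>}. i \<noteq> j \<longrightarrow> a i j + b i j = c i j))"
proof -
  note T = assms(5)[unfolded inT_def]
  have bstar: "dstar \<nu> b j = (\<Sum>k\<in>{1..\<nu>}-{j}. (\<Sum>i\<in>{1..\<nu>}. t i j k))" if "j \<in> {1..\<nu>}" for j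
    unfolding dstar_def using T that by (intro sum.cong) auto
  have le: "t j j k \<le> (\<Sum>i\<in>{1..\<nu>}. t i j k)" if "j \<in> {1..\<nu>}" for j k
    using split_sum[OF that, of "\<lambda>i. t i j k"] by simp
  have A: "(\<Sum>k\<in>{1..\<nu>}-{j}. t j j k) \<le> dstar \<nu> b j" if "j \<in> {1..\<nu>}" for j
    unfolding bstar[OF that] using le[OF that] by (intro sum_mono) auto
  show ?thesis
  proof (intro conjI impI)
    show "\<forall>j\<in>{1..\<nu>}. int (dstar \<nu> a j) + int (dstar \<nu> b j) - int (tstar \<nu> a t j) \<ge> 0"
      proof
      fix j assume j: "j \<in> {1..\<nu>}"
      show "int (dstar \<nu> a j) + int (dstar \<nu> b j) - int (tstar \<nu> a t j) \<ge> 0"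
        using A[OF j] unfolding tstar_def by (simp del: of_nat_sum)
    qed
  next
    assume H: "\<forall>j\<in>{1..\<nu>}. int (dstar \<nu> a j) + int (dstar \<nu> b j) - int (tstar \<nu> a t j) = 0"
    have Z: "t i j k = 0" if "i \<in> {1..\<nu>}" "j \<in> {1..\<nu>}" "k \<in> {1..\<nu>}" "i \<noteq> j" "j \<noteq> k" for i j k
    proof -
      have "dstar \<nu> b j = (\<Sum>k\<in>{1..\<nu>}-{j}. t j j k)"
        using H that unfolding tstar_def by (fastforce simp del: of_nat_sum)
      then have "(\<Sum>i\<in>{1..\<nu>}. t i j k) = t j j k"
        using sum_eq_pointwise[of "{1..\<nu>}-{j}" "\<lambda>k. t j j k" "\<lambda>k. (\<Sum>i\<in>{1..\<nu>}. t i j k)" k]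
          bstar[OF that(2)] le[OF that(2)] that by auto
      then have "(\<Sum>i\<in>{1..\<nu>}-{j}. t i j k) = 0"
        using split_sum[OF that(2), of "\<lambda>i. t i j k"] by simp
      then show ?thesis using that by simp
    qed
    show "\<forall>i\<in>{1..\<nu>}. \<forall>j\<in>{1..\<nu>}. i \<noteq> j \<longrightarrow> a i j + b i j = c i j"
    proof (intro ballI impI)
      fix i k assume i: "i \<in> {1..\<nu>}" and k: "k \<in> {1..\<nu>}" and ik: "i \<noteq> k"
      have "a i k = t i k k + (\<Sum>m\<in>{1..\<nu>}-{k}. t i k m)"
        using T i k ik split_sum[OF k, of "t i k"] by auto
      also have "(\<Sum>m\<in>{1..\<nu>}-{k}. t i k m) = 0" using Z i k ik by auto
      finally have ha: "a i k = t i k k" by simp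
      have "b i k = t i i k + (\<Sum>m\<in>{1..\<nu>}-{i}. t m i k)"
        using T i k ik split_sum[OF i, of "\<lambda>m. t m i k"] by auto
      also have "(\<Sum>m\<in>{1..\<nu>}-{i}. t m i k) = 0" using Z i k ik by auto
      finally have hb: "b i k = t i i k" by simp
      have "c i k = t i i k + (\<Sum>m\<in>{1..\<nu>}-{i}. t i m k)"
        using T i k ik split_sum[OF i, of "\<lambda>m. t i m k"] by auto
      also have "(\<Sum>m\<in>{1..\<nu>}-{i}. t i m k) = t i k k + (\<Sum>m\<in>{1..\<nu>}-{i}-{k}. t i m k)"
        using k ik by (subst sum.remove[of _ k]) auto
      also have "(\<Sum>m\<in>{1..\<nu>}-{i}-{k}. t i m k) = 0" using Z i k ik by auto
      finally show "a i k + b i k = c i k" using ha hb by simp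
    qed
  qed
qed

end
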